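(* Let $0<r<q-1$, $n\ge1$, $0\le k,s\le q-1$, and let $\begin{pmatrix}a&b\\c&d\end{pmatrix}\in I$. If $s_n^k$ and $t_n^s$ are $I(1)$-invariant modulo $(\mathrm{Ker}\,T_{-1,0},\mathrm{Ker}\,T_{1,2})$, then they are $I$-eigenvectors, with (1) $\begin{pmatrix}a&b\\c&d\end{pmatrix}\cdot s_n^k=\bar d^{\,r}(\bar d\bar a^{-1})^ks_n^k$, (2) $\begin{pmatrix}a&b\\c&d\end{pmatrix}\cdot t_n^s=\bar a^{\,r}(\bar d\bar a^{-1})^st_n^s$.
   Context: $F$ is a finite extension of $\mathbb Q_p$ with ring of integers $\mathcal O$, uniformizer $\varpi$, residue field $\mathbb F_q$; $[x]$ is the multiplicative representative of $x\in\mathbb F_q$, $\bar a\in\mathbb F_q\subset\overline{\mathbb F}_p$ the reduction of $a\in\mathcal O$; convention $0^0=1$. $G=\mathrm{GL}_2(F)$, $K=\mathrm{GL}_2(\mathcal O)$, $Z$ the centre, $I$ the Iwahori subgroup of $K$ (lower-left entry in $\varpi\mathcal O$), $I(1)$ the pro-$p$ Iwahori (elements of $I$ with diagonal entries $\equiv1\bmod\varpi$). $\chi_r:IZ\to\overline{\mathbb F}_p^\times$, $\begin{pmatrix} a&b\\ \varpi c&d\end{pmatrix}\mapsto\bar d^{\,r}$, $\mathrm{diag}(\varpi,\varpi)\mapsto1$; in the compact induction $\mathrm{ind}_{IZ}^G\chi_r$, $[g,1]$ is the element supported on $IZg^{-1}$ with value $1$ at $g^{-1}$, so $h[g,1]=[hg,1]$.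 $\beta=\begin{pmatrix}0&1\\ \varpi&0\end{pmatrix}$, $w=\begin{pmatrix}0&1\\1&0\end{pmatrix}$. $T_{-1,0},T_{1,2}$ are the $G$-endomorphisms with $T_{-1,0}[g,1]=\sum_{\lambda\in I_1}[g\begin{pmatrix}\varpi&\lambda\\0&1\end{pmatrix},1]$, $T_{1,2}[g,1]=\sum_{\lambda\in I_1}[g\beta\begin{pmatrix}1&\lambda\\0&1\end{pmatrix}w,1]$; $(\mathrm{Ker}\,T_{-1,0},\mathrm{Ker}\,T_{1,2})$ denotes $\mathrm{Ker}\,T_{-1,0}+\mathrm{Ker}\,T_{1,2}$. $I_n=\{\sum_{i=0}^{n-1}[\mu_i]\varpi^i:\mu_i\in\mathbb F_q\}$, digits $\mu_i$, truncation $[\mu]_m=\sum_{i<m}[\mu_i]\varpi^i$. $s_n^k=\sum_{\mu\in I_n}\mu_{n-1}^k[\begin{pmatrix}\varpi^n&\mu\\0&1\end{pmatrix},1]$ and $t_n^s=\sum_{\mu\in I_n}\mu_{n-1}^s[\begin{pmatrix}\varpi^{n-1}&[\mu]_{n-1}\\0&1\end{pmatrix}\begin{pmatrix}1&[\mu_{n-1}]\\0&1\end{pmatrix}w,1]$. *)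

theory Defs
  imports "HOL-Computational_Algebra.Polynomial" "HOL-Library.FuncSet"
begin

datatype 'a m2 = M2 (m11: 'a) (m12: 'a) (m21: 'a) (m22: 'a)

definition mmul :: "'a::comm_ring_1 m2 \<Rightarrow> 'a m2 \<Rightarrow> 'a m2" where
  "mmul A B = M2 (m11 A * m11 B + m12 A * m21 B) (m11 A * m12 B + m12 A * m22 B)
                 (m21 A * m11 B + m22 A * m21 B) (m21 A * m12 B + m22 A * m22 B)"

definition mdet :: "'a::comm_ring_1 m2 \<Rightarrow> 'a" where
  "mdet A = m11 A * m22 A - m12 A * m21 A"

definition minv :: "'a::field m2 \<Rightarrow> 'a m2" where
  "minv A = M2 (m22 A / mdet A) (- m12 A / mdet A) (- m21 A / mdet A) (m11 A / mdet A)"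

text \<open>v is the normalised discrete valuation on F (its value at 0 is irrelevant);
  vge v x N means "x = 0 or v x >= N".\<close>

definition vge :: "('f::field \<Rightarrow> int) \<Rightarrow> 'f \<Rightarrow> int \<Rightarrow> bool" where
  "vge v x N \<longleftrightarrow> x = 0 \<or> N \<le> v x"

definition Oset :: "('f::field \<Rightarrow> int) \<Rightarrow> 'f set" where
  "Oset v = {x. vge v x 0}"

text \<open>The standing setting: F (type 'f, characteristic 0) is complete for the discrete
  valuation v with uniformizer u, and the reduction map red : O \<rightarrow> 'k is a ring
  homomorphism with kernel u O and finite image F_q; 'k is an algebraic closure of F_p
  (algebraically closed, characteristic p, algebraic over the prime field).
  A complete discretely valued field of characteristic 0 with finite residue field of
  characteristic p is exactly a finite extension of Q_p.\<close>

definition padic_setting :: "('f::field_char_0 \<Rightarrow> int) \<Rightarrow> 'f \<Rightarrow> nat \<Rightarrow> ('f \<Rightarrow> 'k::field) \<Rightarrow> bool" where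
  "padic_setting v u p red \<longleftrightarrow>
     (\<forall>x y. x \<noteq> 0 \<longrightarrow> y \<noteq> 0 \<longrightarrow> v (x * y) = v x + v y) \<and>
     (\<forall>x y. x \<noteq> 0 \<longrightarrow> y \<noteq> 0 \<longrightarrow> x + y \<noteq> 0 \<longrightarrow> min (v x) (v y) \<le> v (x + y)) \<and>
     u \<noteq> 0 \<and> v u = 1 \<and>
     (\<forall>a :: nat \<Rightarrow> 'f. (\<forall>N. \<exists>M. \<forall>m\<ge>M. \<forall>m'\<ge>M. vge v (a m - a m') N) \<longrightarrow>
          (\<exists>L. \<forall>N. \<exists>M. \<forall>m\<ge>M. vge v (a m - L) N)) \<and>
     prime p \<and> of_nat p = (0::'k) \<and>
     (\<forall>x\<in>Oset v. \<forall>y\<in>Oset v. red (x + y) = red x + red y \<and> red (x * y) = red x * red y) \<and>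
     red 1 = 1 \<and>
     (\<forall>x\<in>Oset v. red x = 0 \<longleftrightarrow> vge v x 1) \<and>
     finite (red ` Oset v) \<and>
     (\<forall>P :: 'k poly. 0 < degree P \<longrightarrow> (\<exists>z. poly P z = 0)) \<and>
     (\<forall>z :: 'k. \<exists>P :: 'k poly. P \<noteq> 0 \<and> (\<forall>i. coeff P i \<in> range of_nat) \<and> poly P z = 0)"

definition Fq :: "('f::field \<Rightarrow> int) \<Rightarrow> ('f \<Rightarrow> 'k) \<Rightarrow> 'k set" where
  "Fq v red = red ` Oset v"

definition teich :: "('f::field \<Rightarrow> int) \<Rightarrow> ('f \<Rightarrow> 'k) \<Rightarrow> 'k \<Rightarrow> 'f" where
  "teich v red x = (THE t. t \<in> Oset v \<and> red t = x \<and> t ^ card (Fq v red) = t)"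

definition Iw :: "('f::field \<Rightarrow> int) \<Rightarrow> 'f m2 set" where
  "Iw v = {g. m11 g \<in> Oset v \<and> m12 g \<in> Oset v \<and> m22 g \<in> Oset v \<and> vge v (m21 g) 1
              \<and> mdet g \<noteq> 0 \<and> v (mdet g) = 0}"

definition I1 :: "('f::field \<Rightarrow> int) \<Rightarrow> ('f \<Rightarrow> 'k::field) \<Rightarrow> 'f m2 set" where
  "I1 v red = {g \<in> Iw v. red (m11 g) = 1 \<and> red (m22 g) = 1}"

definition IZ :: "('f::field \<Rightarrow> int) \<Rightarrow> 'f m2 set" where
  "IZ v = {mmul (M2 z 0 0 z) h | z h. z \<noteq> 0 \<and> h \<in> Iw v}"

text \<open>chi_r on IZ: write g = u^m z h with z a unit scalar, h in I; m = v(det g)/2.\<close>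
definition chi :: "('f::field \<Rightarrow> int) \<Rightarrow> 'f \<Rightarrow> ('f \<Rightarrow> 'k::field) \<Rightarrow> nat \<Rightarrow> 'f m2 \<Rightarrow> 'k" where
  "chi v u red r g = red (m22 g * u powi (- (v (mdet g) div 2))) ^ r"

text \<open>Elements are functions f : GL2(F) \<rightarrow> 'k (zero off GL2(F)) with f(hx) = chi(h) f(x)
  for h in IZ, supported on finitely many cosets IZ x; G acts by (h.f)(x) = f(xh).\<close>
definition ind_space :: "('f::field \<Rightarrow> int) \<Rightarrow> 'f \<Rightarrow> ('f \<Rightarrow> 'k::field) \<Rightarrow> nat \<Rightarrow> ('f m2 \<Rightarrow> 'k) set" where
  "ind_space v u red r = {f.
     (\<forall>x. mdet x = 0 \<longrightarrow> f x = 0) \<and>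
     (\<forall>h\<in>IZ v. \<forall>x. mdet x \<noteq> 0 \<longrightarrow> f (mmul h x) = chi v u red r h * f x) \<and>
     (\<exists>S. finite S \<and> (\<forall>x. f x \<noteq> 0 \<longrightarrow> (\<exists>s\<in>S. \<exists>h\<in>IZ v. x = mmul h s)))}"

definition act :: "'f::field m2 \<Rightarrow> ('f m2 \<Rightarrow> 'k) \<Rightarrow> ('f m2 \<Rightarrow> 'k)" where
  "act h f = (\<lambda>x. f (mmul x h))"

text \<open>[g,1]: supported on IZ g^{-1}, value 1 at g^{-1}.\<close>
definition bracket :: "('f::field \<Rightarrow> int) \<Rightarrow> 'f \<Rightarrow> ('f \<Rightarrow> 'k::field) \<Rightarrow> nat \<Rightarrow> 'f m2 \<Rightarrow> ('f m2 \<Rightarrow> 'k)" where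
  "bracket v u red r g = (\<lambda>x. if mdet x \<noteq> 0 \<and> mmul x g \<in> IZ v then chi v u red r (mmul x g) else 0)"

text \<open>Cosets IZ x meeting the support of f, a chosen representative of each, and the linear
  extension of an operator given on the elements [g,1] (using f = sum_C f(c_C) [c_C^{-1},1]).\<close>
definition cosets_of :: "('f::field \<Rightarrow> int) \<Rightarrow> ('f m2 \<Rightarrow> 'k::zero) \<Rightarrow> 'f m2 set set" where
  "cosets_of v f = {C. \<exists>x. f x \<noteq> 0 \<and> C = {mmul h x | h. h \<in> IZ v}}"

definition rep :: "'a set \<Rightarrow> 'a" where
  "rep C = (SOME c. c \<in> C)"

definition lin_ext :: "('f::field \<Rightarrow> int) \<Rightarrow> ('f m2 \<Rightarrow> ('f m2 \<Rightarrow> 'k::field)) \<Rightarrow> ('f m2 \<Rightarrow> 'k) \<Rightarrow> ('f m2 \<Rightarrow> 'k)" where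
  "lin_ext v B f = (\<lambda>x. \<Sum>C\<in>cosets_of v f. f (rep C) * B (minv (rep C)) x)"

definition beta :: "'f \<Rightarrow> 'f::field m2" where
  "beta u = M2 0 1 u 0"

definition wmat :: "'f::field m2" where
  "wmat = M2 0 1 1 0"

definition Tm10_basis :: "('f::field \<Rightarrow> int) \<Rightarrow> 'f \<Rightarrow> ('f \<Rightarrow> 'k::field) \<Rightarrow> nat \<Rightarrow> 'f m2 \<Rightarrow> ('f m2 \<Rightarrow> 'k)" where
  "Tm10_basis v u red r g = (\<lambda>x. \<Sum>l\<in>Fq v red. bracket v u red r (mmul g (M2 u (teich v red l) 0 1)) x)"

definition T12_basis :: "('f::field \<Rightarrow> int) \<Rightarrow> 'f \<Rightarrow> ('f \<Rightarrow> 'k::field) \<Rightarrow> nat \<Rightarrow> 'f m2 \<Rightarrow> ('f m2 \<Rightarrow> 'k)" where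
  "T12_basis v u red r g = (\<lambda>x. \<Sum>l\<in>Fq v red.
      bracket v u red r (mmul (mmul (mmul g (beta u)) (M2 1 (teich v red l) 0 1)) wmat) x)"

definition Tm10 where "Tm10 v u red r = lin_ext v (Tm10_basis v u red r)"
definition T12 where "T12 v u red r = lin_ext v (T12_basis v u red r)"

text \<open>(Ker T_{-1,0}, Ker T_{1,2}) = Ker T_{-1,0} + Ker T_{1,2} inside ind.\<close>
definition kersum :: "('f::field \<Rightarrow> int) \<Rightarrow> 'f \<Rightarrow> ('f \<Rightarrow> 'k::field) \<Rightarrow> nat \<Rightarrow> ('f m2 \<Rightarrow> 'k) set" where
  "kersum v u red r = {(\<lambda>x. a x + b x) | a b.
      a \<in> ind_space v u red r \<and> Tm10 v u red r a = (\<lambda>_. 0) \<and>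
      b \<in> ind_space v u red r \<and> T12 v u red r b = (\<lambda>_. 0)}"

text \<open>Digit vectors (mu_0,...,mu_{n-1}) in F_q^n; they parametrise I_n bijectively.\<close>
definition digits :: "('f::field \<Rightarrow> int) \<Rightarrow> ('f \<Rightarrow> 'k) \<Rightarrow> nat \<Rightarrow> (nat \<Rightarrow> 'k) set" where
  "digits v red n = PiE {..<n} (\<lambda>_. Fq v red)"

definition tnum :: "('f::field \<Rightarrow> int) \<Rightarrow> 'f \<Rightarrow> ('f \<Rightarrow> 'k) \<Rightarrow> (nat \<Rightarrow> 'k) \<Rightarrow> nat \<Rightarrow> 'f" where
  "tnum v u red mu m = (\<Sum>i<m. teich v red (mu i) * u ^ i)"

definition s_vec :: "('f::field \<Rightarrow> int) \<Rightarrow> 'f \<Rightarrow> ('f \<Rightarrow> 'k::field) \<Rightarrow> nat \<Rightarrow> nat \<Rightarrow> nat \<Rightarrow> ('f m2 \<Rightarrow> 'k)" where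
  "s_vec v u red r n k = (\<lambda>x. \<Sum>mu\<in>digits v red n.
      mu (n - 1) ^ k * bracket v u red r (M2 (u ^ n) (tnum v u red mu n) 0 1) x)"

definition t_vec :: "('f::field \<Rightarrow> int) \<Rightarrow> 'f \<Rightarrow> ('f \<Rightarrow> 'k::field) \<Rightarrow> nat \<Rightarrow> nat \<Rightarrow> nat \<Rightarrow> ('f m2 \<Rightarrow> 'k)" where
  "t_vec v u red r n s = (\<lambda>x. \<Sum>mu\<in>digits v red n.
      mu (n - 1) ^ s * bracket v u red r
        (mmul (mmul (M2 (u ^ (n - 1)) (tnum v u red mu (n - 1)) 0 1)
                    (M2 1 (teich v red (mu (n - 1))) 0 1)) wmat) x)"

end

theory Submission
  imports Defs
begin

lemma mmul_M2[simp]: "mmul (M2 a b c d) (M2 a' b' c' d') =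
   M2 (a*a' + b*c') (a*b' + b*d') (c*a' + d*c') (c*b' + d*d')"
  by (simp add: mmul_def)

lemma mmul_assoc: "mmul (mmul A B) C = mmul A (mmul B C)"
  by (cases A; cases B; cases C) (simp add: algebra_simps)

lemma mdet_M2[simp]: "mdet (M2 a b c d) = a*d - b*c"
  by (simp add: mdet_def)

lemma mdet_mmul: "mdet (mmul A B) = mdet A * mdet B"
  by (cases A; cases B) (simp add: algebra_simps)

locale ps =
  fixes v :: "'f::field_char_0 \<Rightarrow> int" and u :: 'f and p :: nat and red :: "'f \<Rightarrow> 'k::field"
  assumes PS: "padic_setting v u p red"
begin

abbreviation "Ov \<equiv> Oset v"

lemma vmul: "x \<noteq> 0 \<Longrightarrow> y \<noteq> 0 \<Longrightarrow> v (x*y) = v x + v y"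
  using PS unfolding padic_setting_def by blast
lemma vadd: "x \<noteq> 0 \<Longrightarrow> y \<noteq> 0 \<Longrightarrow> x + y \<noteq> 0 \<Longrightarrow> min (v x) (v y) \<le> v (x+y)"
  using PS unfolding padic_setting_def by blast
lemma u_nz: "u \<noteq> 0" and v_u: "v u = 1"
  using PS unfolding padic_setting_def by blast+
lemma complete_all: "\<forall>a :: nat \<Rightarrow> 'f. (\<forall>N. \<exists>M. \<forall>m\<ge>M. \<forall>m'\<ge>M. vge v (a m - a m') N) \<longrightarrow>
          (\<exists>L. \<forall>N. \<exists>M. \<forall>m\<ge>M. vge v (a m - L) N)"
  using PS unfolding padic_setting_def by (elim conjE) assumption
lemma complete: "(\<forall>N. \<exists>M. \<forall>m\<ge>M. \<forall>m'\<ge>M. vge v ((a :: nat \<Rightarrow> 'f) m - a m') N) \<Longrightarrow>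
          (\<exists>L. \<forall>N. \<exists>M. \<forall>m\<ge>M. vge v (a m - L) N)"
  using complete_all by blast
lemma red_add: "x \<in> Ov \<Longrightarrow> y \<in> Ov \<Longrightarrow> red (x+y) = red x + red y"
  using PS unfolding padic_setting_def by blast
lemma red_mul: "x \<in> Ov \<Longrightarrow> y \<in> Ov \<Longrightarrow> red (x*y) = red x * red y"
  using PS unfolding padic_setting_def by blast
lemma red_one[simp]: "red 1 = 1"
  using PS unfolding padic_setting_def by blast
lemma red_zero_iff: "x \<in> Ov \<Longrightarrow> red x = 0 \<longleftrightarrow> vge v x 1"
  using PS unfolding padic_setting_def by blast
lemma finFq: "finite (Fq v red)"
  using PS unfolding padic_setting_def Fq_def by blast

lemma v_one[simp]: "v 1 = 0"
  using vmul[of 1 1] by simp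
lemma v_m1[simp]: "v (-1) = 0"
  using vmul[of "-1" "-1"] by simp
lemma v_neg[simp]: "v (-x) = v x"
  using vmul[of "-1" x] by (cases "x = 0") auto
lemma v_inverse: "x \<noteq> 0 \<Longrightarrow> v (inverse x) = - v x"
  using vmul[of x "inverse x"] by simp
lemma v_pow: "x \<noteq> 0 \<Longrightarrow> v (x^n) = int n * v x"
  by (induction n) (auto simp: vmul algebra_simps)
lemma v_powi: "x \<noteq> 0 \<Longrightarrow> v (x powi m) = m * v x"
  by (auto simp: power_int_def v_pow v_inverse)

lemma vge_add: "vge v x N \<Longrightarrow> vge v y N \<Longrightarrow> vge v (x+y) N"
proof -
  assume a: "vge v x N" "vge v y N"
  show ?thesis
  proof (cases "x = 0 \<or> y = 0 \<or> x + y = 0")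
    case True then show ?thesis using a by (auto simp: vge_def)
  next
    case False
    then have "min (v x) (v y) \<le> v (x+y)" using vadd[of x y] by auto
    then show ?thesis using a False by (auto simp: vge_def)
  qed
qed
lemma vge_neg[simp]: "vge v (-x) N \<longleftrightarrow> vge v x N"
  unfolding vge_def by auto
lemma vge_diff: "vge v x N \<Longrightarrow> vge v y N \<Longrightarrow> vge v (x-y) N"
  using vge_add[of x N "-y"] by simp
lemma vge_mult: "vge v x N \<Longrightarrow> vge v y M \<Longrightarrow> vge v (x*y) (N+M)"
  unfolding vge_def using vmul[of x y] by (cases "x = 0"; cases "y = 0") auto
lemma vge_mono: "vge v x N \<Longrightarrow> M \<le> N \<Longrightarrow> vge v x M"
  unfolding vge_def by auto
lemma vge_0[simp]: "vge v 0 N"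
  unfolding vge_def by auto
lemma vge_all: assumes "\<And>N. vge v x N" shows "x = 0"
  using assms[of "v x + 1"] by (auto simp: vge_def)
lemma vge_allpos: "(\<And>N. N \<ge> 1 \<Longrightarrow> vge v x N) \<Longrightarrow> x = 0"
  by (rule vge_all) (metis linorder_le_cases vge_mono)

lemma O_iff: "x \<in> Ov \<longleftrightarrow> vge v x 0"
  by (simp add: Oset_def)
lemma O_add: "x \<in> Ov \<Longrightarrow> y \<in> Ov \<Longrightarrow> x + y \<in> Ov"
  by (simp add: O_iff vge_add)
lemma O_neg: "x \<in> Ov \<Longrightarrow> -x \<in> Ov"
  by (simp add: O_iff)
lemma O_diff: "x \<in> Ov \<Longrightarrow> y \<in> Ov \<Longrightarrow> x - y \<in> Ov"
  by (simp add: O_iff vge_diff)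
lemma O_mult: "x \<in> Ov \<Longrightarrow> y \<in> Ov \<Longrightarrow> x * y \<in> Ov"
  using vge_mult[of x 0 y 0] by (simp add: O_iff)
lemma O_0[simp]: "0 \<in> Ov" and O_1[simp]: "1 \<in> Ov" and O_u[simp]: "u \<in> Ov"
  by (auto simp: O_iff vge_def v_u)
lemma O_pow: "x \<in> Ov \<Longrightarrow> x ^ n \<in> Ov"
  by (induction n) (auto intro: O_mult)
lemma O_sum: "(\<And>i. i \<in> A \<Longrightarrow> f i \<in> Ov) \<Longrightarrow> sum f A \<in> Ov"
  by (induction A rule: infinite_finite_induct) (auto intro: O_add)
lemma O_inverse: "x \<noteq> 0 \<Longrightarrow> v x = 0 \<Longrightarrow> inverse x \<in> Ov"
  by (simp add: O_iff vge_def v_inverse)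

lemma red_0[simp]: "red 0 = 0"
proof -
  have "red (0+0) = red 0 + red 0" by (rule red_add) simp_all
  then show ?thesis by (metis add_0 add_cancel_right_right)
qed
lemma red_neg: "x \<in> Ov \<Longrightarrow> red (-x) = - red x"
  using red_add[of x "-x"] O_neg[of x] by (simp add: minus_unique)
lemma red_diff: "x \<in> Ov \<Longrightarrow> y \<in> Ov \<Longrightarrow> red (x-y) = red x - red y"
  using red_add[of x "-y"] red_neg[of y] O_neg[of y] by simp
lemma red_pow: "x \<in> Ov \<Longrightarrow> red (x ^ n) = red x ^ n"
  by (induction n) (auto simp: red_mul O_pow)
lemma red_sum: "(\<And>i. i \<in> A \<Longrightarrow> f i \<in> Ov) \<Longrightarrow> red (sum f A) = (\<Sum>i\<in>A. red (f i))"
proof (induction A rule: infinite_finite_induct)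
  case (insert x F)
  then show ?case by (simp add: red_add O_sum)
qed auto
lemma red_nz_iff: "x \<in> Ov \<Longrightarrow> red x \<noteq> 0 \<longleftrightarrow> x \<noteq> 0 \<and> v x = 0"
  using red_zero_iff[of x] by (auto simp: O_iff vge_def)
lemma red_inverse: "x \<in> Ov \<Longrightarrow> red x \<noteq> 0 \<Longrightarrow> red (inverse x) = inverse (red x)"
  using red_mul[of x "inverse x"] red_nz_iff[of x] O_inverse[of x]
  by (simp add: field_simps)
lemma red_eq_vge: "x \<in> Ov \<Longrightarrow> y \<in> Ov \<Longrightarrow> red x = red y \<longleftrightarrow> vge v (x - y) 1"
  using red_zero_iff[of "x-y"] red_diff[of x y] O_diff[of x y] by auto


abbreviation "Fqs \<equiv> Fq v red"
abbreviation "q \<equiv> card (Fq v red)"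

lemma Fq_red: "x \<in> Ov \<Longrightarrow> red x \<in> Fqs"
  by (simp add: Fq_def)
lemma Fq_E: "y \<in> Fqs \<Longrightarrow> (\<And>x. x \<in> Ov \<Longrightarrow> y = red x \<Longrightarrow> P) \<Longrightarrow> P"
  by (auto simp: Fq_def)
lemma Fq_0[simp]: "0 \<in> Fqs" using Fq_red[of 0] by simp
lemma Fq_1[simp]: "1 \<in> Fqs" using Fq_red[of 1] by simp
lemma Fq_add: "x \<in> Fqs \<Longrightarrow> y \<in> Fqs \<Longrightarrow> x + y \<in> Fqs"
  by (metis Fq_E Fq_red O_add red_add)
lemma Fq_mult: "x \<in> Fqs \<Longrightarrow> y \<in> Fqs \<Longrightarrow> x * y \<in> Fqs"
  by (metis Fq_E Fq_red O_mult red_mul)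
lemma Fq_neg: "x \<in> Fqs \<Longrightarrow> - x \<in> Fqs"
  by (metis Fq_E Fq_red O_neg red_neg)
lemma Fq_diff: "x \<in> Fqs \<Longrightarrow> y \<in> Fqs \<Longrightarrow> x - y \<in> Fqs"
  using Fq_add[of x "-y"] Fq_neg[of y] by simp
lemma Fq_inverse: "x \<in> Fqs \<Longrightarrow> inverse x \<in> Fqs"
proof -
  assume "x \<in> Fqs"
  then obtain t where t: "t \<in> Ov" "x = red t" by (rule Fq_E)
  show ?thesis
  proof (cases "x = 0")
    case True then show ?thesis by simp
  next
    case False
    then have "red (inverse t) = inverse x" using t red_inverse by simp
    moreover have "inverse t \<in> Ov" using False t red_nz_iff O_inverse by auto
    ultimately show ?thesis using Fq_red by metis
  qed
qed
lemma Fq_divide: "x \<in> Fqs \<Longrightarrow> y \<in> Fqs \<Longrightarrow> x / y \<in> Fqs"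
  by (simp add: divide_inverse Fq_mult Fq_inverse)

lemma q_pos: "q > 0"
  using finFq Fq_0 card_gt_0_iff by blast

lemma q_zero: "of_nat q = (0::'k)"
proof -
  have "(\<Sum>x\<in>Fqs. x + 1) = (\<Sum>x\<in>Fqs. x)"
    by (rule sum.reindex_bij_witness[of _ "\<lambda>x. x - 1" "\<lambda>x. x + 1"])
       (auto intro: Fq_add Fq_diff)
  then show ?thesis by (simp add: sum.distrib)
qed

lemma Fq_pow_q: "y \<in> Fqs \<Longrightarrow> y ^ q = y"
proof (cases "y = 0")
  case True then show ?thesis using q_pos by simp
next
  case False
  assume y: "y \<in> Fqs"
  let ?A = "Fqs - {0}"
  have fA: "finite ?A" using finFq by simp
  have cA: "card ?A = q - 1" using finFq by (simp add: card_Diff_singleton)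
  have "(\<Prod>x\<in>?A. y * x) = (\<Prod>x\<in>?A. x)"
    by (rule prod.reindex_bij_witness[of _ "\<lambda>x. inverse y * x" "\<lambda>x. y * x"])
       (use False y in \<open>auto intro: Fq_mult Fq_inverse\<close>)
  moreover have "(\<Prod>x\<in>?A. y * x) = y ^ (q - 1) * (\<Prod>x\<in>?A. x)"
    by (simp add: prod.distrib cA)
  moreover have "(\<Prod>x\<in>?A. x) \<noteq> 0" using fA by simp
  ultimately have "y ^ (q - 1) = 1" by simp
  then have "y ^ Suc (q - 1) = y" by simp
  then show ?thesis using q_pos by simp
qed

lemma key: assumes "a \<in> Ov" "b \<in> Ov" "vge v (a - b) j" "j \<ge> 1"
  shows "vge v (a ^ q - b ^ q) (j + 1)"
proof -
  let ?S = "\<Sum>i<q. b ^ (q - Suc i) * a ^ i"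
  have eq: "a ^ q - b ^ q = (a - b) * ?S" by (rule power_diff_sumr2)
  have rab: "red a = red b" using assms red_eq_vge vge_mono by blast
  have SO: "?S \<in> Ov" using assms by (auto intro!: O_sum O_mult O_pow)
  have "red ?S = (\<Sum>i<q. red b ^ (q - Suc i) * red a ^ i)"
    using assms by (simp add: red_sum O_mult O_pow red_mul red_pow)
  also have "\<dots> = (\<Sum>i<q. red b ^ (q - 1))"
    by (rule sum.cong) (auto simp: rab simp flip: power_add)
  also have "\<dots> = 0" using q_zero by simp
  finally have "vge v ?S 1" using red_zero_iff SO by blast
  then show ?thesis using eq vge_mult[OF assms(3)] by simp
qed

lemma pow_iter: "(t::'a::monoid_mult) ^ q = t \<Longrightarrow> t ^ (q ^ m) = t"
  by (induction m) (simp_all add: power_mult)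

lemma iter_vge: assumes "a \<in> Ov" "b \<in> Ov" "vge v (a - b) 1"
  shows "vge v (a ^ (q ^ m) - b ^ (q ^ m)) (int m + 1)"
proof (induction m)
  case 0 then show ?case using assms by simp
next
  case (Suc m)
  have "vge v ((a ^ (q ^ m)) ^ q - (b ^ (q ^ m)) ^ q) (int m + 1 + 1)"
    by (rule key) (use assms Suc in \<open>auto intro: O_pow\<close>)
  then show ?case by (simp add: power_mult[symmetric] mult.commute add.commute)
qed

lemma teich_uniq: assumes "t \<in> Ov" "t' \<in> Ov" "red t = red t'" "t ^ q = t" "t' ^ q = t'"
  shows "t = t'"
proof -
  have "vge v (t - t') 1" using assms red_eq_vge by blast
  have "vge v (t - t') N" if "N \<ge> 1" for N
  proof -
    have "vge v (t ^ (q ^ nat (N - 1)) - t' ^ (q ^ nat (N - 1))) (int (nat (N-1)) + 1)"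
      by (rule iter_vge) (use assms \<open>vge v (t - t') 1\<close> in auto)
    then show ?thesis using pow_iter[of t] pow_iter[of t'] assms that by simp
  qed
  then show ?thesis using vge_allpos[of "t - t'"] by simp
qed

lemma teich_ex: assumes "x \<in> Fqs" shows "\<exists>t. t \<in> Ov \<and> red t = x \<and> t ^ q = t"
proof -
  obtain x0 where x0: "x0 \<in> Ov" "x = red x0" using assms by (rule Fq_E)
  define a where "a m = x0 ^ (q ^ m)" for m
  have aO: "a m \<in> Ov" for m using x0 by (simp add: a_def O_pow)
  have ra: "red (a m) = x" for m using x0 Fq_pow_q[OF assms] pow_iter[of x]
    by (simp add: a_def red_pow)
  have aS: "a (Suc m) = a m ^ q" for m
    unfolding a_def by (simp add: power_mult[symmetric] mult.commute)
  have x0q: "vge v (x0 ^ q - x0) 1"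
    using x0 Fq_pow_q[OF assms] red_eq_vge[of "x0 ^ q" x0] by (simp add: O_pow red_pow)
  have stepv: "vge v (a (Suc m) - a m) (int m + 1)" for m
  proof -
    have "vge v ((x0 ^ q) ^ (q ^ m) - x0 ^ (q ^ m)) (int m + 1)"
      by (rule iter_vge) (use x0 x0q in \<open>auto intro: O_pow\<close>)
    then show ?thesis by (simp add: a_def power_mult[symmetric] mult.commute)
  qed
  have mono: "vge v (a m' - a m) (int m + 1)" if "m \<le> m'" for m m'
    using that
  proof (induction m' rule: dec_induct)
    case base then show ?case by simp
  next
    case (step n)
    have "vge v (a (Suc n) - a n) (int m + 1)"
      using stepv[of n] vge_mono step.hyps by fastforce
    then have "vge v ((a (Suc n) - a n) + (a n - a m)) (int m + 1)"
      using vge_add step.IH by blast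
    then show ?case by simp
  qed
  have "\<forall>N. \<exists>M. \<forall>m\<ge>M. \<forall>m'\<ge>M. vge v (a m - a m') N"
  proof
    fix N
    show "\<exists>M. \<forall>m\<ge>M. \<forall>m'\<ge>M. vge v (a m - a m') N"
    proof (intro exI allI impI)
      fix m m' assume h: "nat N \<le> m" "nat N \<le> m'"
      show "vge v (a m - a m') N"
      proof (cases "m \<le> m'")
        case True
        then have "vge v (a m - a m') (int m + 1)" using mono[of m m'] by (metis minus_diff_eq vge_neg)
        then show ?thesis by (rule vge_mono) (use h in auto)
      next
        case False
        then have "vge v (a m - a m') (int m' + 1)" using mono[of m' m] by simp
        then show ?thesis by (rule vge_mono) (use h in auto)
      qed
    qed
  qed
  then obtain L where L: "\<forall>N. \<exists>M. \<forall>m\<ge>M. vge v (a m - L) N" using complete by blast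
  obtain M0 where M0: "vge v (a M0 - L) 0" using L by blast
  have LO: "L \<in> Ov" using O_diff[OF aO[of M0], of "a M0 - L"] M0 by (simp add: O_iff)
  obtain M1 where M1: "vge v (a M1 - L) 1" using L by blast
  have rL: "red L = x" using red_eq_vge[OF aO[of M1] LO] M1 ra by simp
  have "vge v (L ^ q - L) N" if "N \<ge> 1" for N
  proof -
    obtain M where M: "\<forall>m\<ge>M. vge v (a m - L) N" using L by blast
    have h1: "vge v (a (Suc M) - L) N" using M by simp
    have "vge v (L - a M) N" using M by (metis minus_diff_eq vge_neg order_refl)
    then have "vge v (L ^ q - a M ^ q) (N + 1)" using key[OF LO aO] that by blast
    then have h2: "vge v (L ^ q - a M ^ q) N" using vge_mono by fastforce
    have "L ^ q - L = (L ^ q - a M ^ q) + (a (Suc M) - L)" using aS by simp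
    then show ?thesis using vge_add[OF h2 h1] by simp
  qed
  then have "L ^ q = L" using vge_allpos[of "L ^ q - L"] by simp
  then show ?thesis using LO rL by blast
qed

lemma teich: assumes "x \<in> Fqs"
  shows "teich v red x \<in> Ov" "red (teich v red x) = x" "teich v red x ^ q = teich v red x"
proof -
  have "\<exists>!t. t \<in> Ov \<and> red t = x \<and> t ^ q = t"
    using teich_ex[OF assms] teich_uniq by blast
  then have "teich v red x \<in> Ov \<and> red (teich v red x) = x \<and> teich v red x ^ q = teich v red x"
    unfolding teich_def by (rule theI')
  then show "teich v red x \<in> Ov" "red (teich v red x) = x" "teich v red x ^ q = teich v red x"
    by auto
qed

lemma teich_mult: assumes "x \<in> Fqs" "y \<in> Fqs"
  shows "teich v red (x * y) = teich v red x * teich v red y"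
proof -
  have xy: "x * y \<in> Fqs" using assms Fq_mult by blast
  show ?thesis
    by (rule teich_uniq) (use teich[OF xy] teich[OF assms(1)] teich[OF assms(2)] in
        \<open>auto simp: O_mult red_mul power_mult_distrib\<close>)
qed

lemma teich_unit: assumes "x \<in> Fqs" "x \<noteq> 0"
  shows "teich v red x \<noteq> 0" "v (teich v red x) = 0"
  using red_nz_iff[OF teich(1)[OF assms(1)]] teich(2)[OF assms(1)] assms(2) by auto


definition unitv :: "'f \<Rightarrow> bool" where "unitv x \<longleftrightarrow> x \<in> Ov \<and> x \<noteq> 0 \<and> v x = 0"

lemma unitv_inv: "unitv x \<Longrightarrow> unitv (inverse x)"
  by (auto simp: unitv_def O_inverse v_inverse)
lemma unitv_mult: "unitv x \<Longrightarrow> unitv y \<Longrightarrow> unitv (x * y)"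
  by (auto simp: unitv_def O_mult vmul)

lemma Iw_diag: assumes "h \<in> Iw v" "unitv be" "unitv ep"
  shows "mmul h (M2 be 0 0 ep) \<in> Iw v"
proof (cases h)
  case (M2 a b c d)
  have d: "mdet h \<noteq> 0" "v (mdet h) = 0" using assms(1) by (auto simp: Iw_def)
  have "vge v (c * be) (1 + 0)" using assms M2 by (intro vge_mult) (auto simp: Iw_def unitv_def O_iff)
  moreover have "(a * be * (d * ep) - b * ep * (c * be)) = mdet h * (be * ep)"
    using M2 by (simp add: algebra_simps)
  moreover have "unitv (be * ep)" using assms unitv_mult by blast
  ultimately show ?thesis using assms M2 d
    by (auto simp: Iw_def O_mult unitv_def vmul)
qed

lemma IZ_diag: assumes "y \<in> IZ v" "unitv be" "unitv ep"
  shows "mmul y (M2 be 0 0 ep) \<in> IZ v"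
proof -
  obtain z h where zh: "y = mmul (M2 z 0 0 z) h" "z \<noteq> 0" "h \<in> Iw v"
    using assms(1) by (auto simp: IZ_def)
  have "mmul y (M2 be 0 0 ep) = mmul (M2 z 0 0 z) (mmul h (M2 be 0 0 ep))"
    using zh by (simp add: mmul_assoc)
  then show ?thesis using zh Iw_diag[OF zh(3) assms(2,3)] by (auto simp: IZ_def)
qed

lemma IZ_diag_iff: assumes "unitv be" "unitv ep"
  shows "mmul y (M2 be 0 0 ep) \<in> IZ v \<longleftrightarrow> y \<in> IZ v"
proof
  assume "mmul y (M2 be 0 0 ep) \<in> IZ v"
  then have "mmul (mmul y (M2 be 0 0 ep)) (M2 (inverse be) 0 0 (inverse ep)) \<in> IZ v"
    using IZ_diag unitv_inv assms by blast
  moreover have "mmul (mmul y (M2 be 0 0 ep)) (M2 (inverse be) 0 0 (inverse ep)) = y"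
    using assms by (cases y) (simp add: mmul_assoc unitv_def)
  ultimately show "y \<in> IZ v" by simp
qed (use IZ_diag assms in blast)

lemma IZ_props: assumes "y \<in> IZ v"
  shows "mdet y \<noteq> 0" "m22 y * u powi (- (v (mdet y) div 2)) \<in> Ov"
proof -
  obtain z h where zh: "y = mmul (M2 z 0 0 z) h" "z \<noteq> 0" "h \<in> Iw v"
    using assms(1) by (auto simp: IZ_def)
  obtain a b c d where h: "h = M2 a b c d" by (cases h)
  have dh: "a * d - b * c \<noteq> 0" "v (a * d - b * c) = 0" "d \<in> Ov" using zh h by (auto simp: Iw_def)
  have y: "y = M2 (z*a) (z*b) (z*c) (z*d)" using zh h by simp
  have md: "mdet y = (z * z) * (a * d - b * c)" using y by (simp add: algebra_simps)
  then show "mdet y \<noteq> 0" using dh zh by simp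
  have vd: "v (mdet y) div 2 = v z" using md dh zh by (simp add: vmul)
  show "m22 y * u powi (- (v (mdet y) div 2)) \<in> Ov"
  proof (cases "d = 0")
    case True then show ?thesis using y by simp
  next
    case False
    have "v (z * d * u powi (- v z)) = v d"
      using False zh u_nz by (simp add: vmul v_powi v_u power_int_eq_0_iff)
    moreover have "v d \<ge> 0" using dh False by (simp add: O_iff vge_def)
    ultimately show ?thesis using y vd by (simp add: O_iff vge_def)
  qed
qed

lemma chi_diag: assumes "y \<in> IZ v" "unitv be" "unitv ep"
  shows "chi v u red r (mmul y (M2 be 0 0 ep)) = red ep ^ r * chi v u red r y"
proof -
  obtain a b c d where y: "y = M2 a b c d" by (cases y)
  have p: "mdet y \<noteq> 0" "m22 y * u powi (- (v (mdet y) div 2)) \<in> Ov" using IZ_props[OF assms(1)] by auto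
  have "mdet (mmul y (M2 be 0 0 ep)) = mdet y * (be * ep)" by (simp add: mdet_mmul)
  then have "v (mdet (mmul y (M2 be 0 0 ep))) = v (mdet y)"
    using p assms unitv_mult[OF assms(2,3)] by (simp add: vmul unitv_def)
  moreover have "m22 (mmul y (M2 be 0 0 ep)) = ep * m22 y" using y by simp
  ultimately have "chi v u red r (mmul y (M2 be 0 0 ep)) = red (ep * (m22 y * u powi (- (v (mdet y) div 2)))) ^ r"
    by (simp add: chi_def mult.assoc)
  also have "\<dots> = red ep ^ r * chi v u red r y"
    using p assms by (simp add: red_mul unitv_def chi_def power_mult_distrib)
  finally show ?thesis .
qed

lemma act_bracket: assumes "mmul t M = mmul M' (M2 be 0 0 ep)" "mdet t \<noteq> 0" "unitv be" "unitv ep"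
  shows "act t (bracket v u red r M) x = red ep ^ r * bracket v u red r M' x"
proof -
  have e: "mmul (mmul x t) M = mmul (mmul x M') (M2 be 0 0 ep)"
    by (simp add: mmul_assoc assms(1))
  have dt: "mdet (mmul x t) \<noteq> 0 \<longleftrightarrow> mdet x \<noteq> 0" using assms(2) by (simp add: mdet_mmul)
  show ?thesis
    unfolding act_def bracket_def e dt IZ_diag_iff[OF assms(3,4)]
    using chi_diag[OF _ assms(3,4)] by simp
qed

lemma ind_scale: "f \<in> ind_space v u red r \<Longrightarrow> (\<lambda>x. c * f x) \<in> ind_space v u red r"
  unfolding ind_space_def by (auto simp: algebra_simps)

lemma lin_ext_scale: "lin_ext v B (\<lambda>x. c * f x) = (\<lambda>x. c * lin_ext v B f x)"
proof (cases "c = 0")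
  case True
  then have "cosets_of v (\<lambda>x. c * f x) = {}" by (simp add: cosets_of_def)
  then show ?thesis using True by (simp add: lin_ext_def)
next
  case False
  then have "cosets_of v (\<lambda>x. c * f x) = cosets_of v f" by (simp add: cosets_of_def)
  then show ?thesis by (simp add: lin_ext_def sum_distrib_left mult.assoc)
qed

lemma kersum_scale: "f \<in> kersum v u red r \<Longrightarrow> (\<lambda>x. c * f x) \<in> kersum v u red r"
proof -
  assume "f \<in> kersum v u red r"
  then obtain a b where ab: "f = (\<lambda>x. a x + b x)" "a \<in> ind_space v u red r" "Tm10 v u red r a = (\<lambda>_. 0)"
     "b \<in> ind_space v u red r" "T12 v u red r b = (\<lambda>_. 0)" by (auto simp: kersum_def)
  have e1: "(\<lambda>x. c * f x) = (\<lambda>x. c * a x + c * b x)" using ab by (simp add: algebra_simps)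
  have "Tm10 v u red r (\<lambda>x. c * a x) = (\<lambda>x. c * Tm10 v u red r a x)"
    unfolding Tm10_def by (rule lin_ext_scale)
  then have e2: "Tm10 v u red r (\<lambda>x. c * a x) = (\<lambda>_. 0)" using ab(3) by simp
  have "T12 v u red r (\<lambda>x. c * b x) = (\<lambda>x. c * T12 v u red r b x)"
    unfolding T12_def by (rule lin_ext_scale)
  then have e3: "T12 v u red r (\<lambda>x. c * b x) = (\<lambda>_. 0)" using ab(5) by simp
  have i1: "(\<lambda>x. c * a x) \<in> ind_space v u red r" using ab(2) by (rule ind_scale)
  have i2: "(\<lambda>x. c * b x) \<in> ind_space v u red r" using ab(4) by (rule ind_scale)
  show ?thesis unfolding kersum_def mem_Collect_eq
    by (rule exI[of _ "\<lambda>x. c * a x"], rule exI[of _ "\<lambda>x. c * b x"]) (use e1 e2 e3 i1 i2 in simp)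
qed

abbreviation "sig c \<equiv> (\<lambda>(mu::nat \<Rightarrow> 'k) n. restrict (\<lambda>i. c * mu i) {..<n})"

lemma sig_mem: "c \<in> Fqs \<Longrightarrow> mu \<in> digits v red n \<Longrightarrow> sig c mu n \<in> digits v red n"
  unfolding digits_def restrict_PiE_iff by (auto intro: Fq_mult PiE_mem)

lemma sig_inv: "c \<noteq> 0 \<Longrightarrow> c \<in> Fqs \<Longrightarrow> mu \<in> digits v red n \<Longrightarrow> sig (inverse c) (sig c mu n) n = mu"
  apply (rule PiE_ext[of _ "{..<n}" "\<lambda>_. Fqs"])
  using sig_mem[of "inverse c" "sig c mu n" n] sig_mem[of c mu n] Fq_inverse[of c]
  by (auto simp: digits_def)

lemma digits_reindex: assumes "c \<in> Fqs" "c \<noteq> 0" "1 \<le> n"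
  shows "(\<Sum>mu\<in>digits v red n. mu (n-1) ^ k * F (sig c mu n))
       = inverse c ^ k * (\<Sum>nu\<in>digits v red n. nu (n-1) ^ k * F nu)"
  unfolding sum_distrib_left
proof (rule sum.reindex_bij_witness[of _ "\<lambda>nu. sig (inverse c) nu n" "\<lambda>mu. sig c mu n"])
  fix mu assume mu: "mu \<in> digits v red n"
  show "sig (inverse c) (sig c mu n) n = mu" using sig_inv assms mu by blast
  show "sig c mu n \<in> digits v red n" using sig_mem assms mu by blast
  show "inverse c ^ k * (sig c mu n (n - 1) ^ k * F (sig c mu n)) = mu (n - 1) ^ k * F (sig c mu n)"
    using assms by (simp add: power_mult_distrib field_simps)
next
  fix nu assume nu: "nu \<in> digits v red n"
  have ic: "inverse c \<in> Fqs" "inverse c \<noteq> 0" using assms Fq_inverse by auto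
  show "sig c (sig (inverse c) nu n) n = nu" using sig_inv[OF ic(2) ic(1) nu] assms by simp
  show "sig (inverse c) nu n \<in> digits v red n" using sig_mem ic nu by blast
qed

lemma tnum_sig: assumes "c \<in> Fqs" "mu \<in> digits v red n" "m \<le> n"
  shows "tnum v u red (sig c mu n) m = teich v red c * tnum v u red mu m"
  unfolding tnum_def sum_distrib_left
proof (rule sum.cong)
  fix i assume "i \<in> {..<m}"
  then have i: "i < n" using assms by simp
  have "mu i \<in> Fqs" using assms(2) i by (auto simp: digits_def intro: PiE_mem)
  then show "teich v red (sig c mu n i) * u ^ i = teich v red c * (teich v red (mu i) * u ^ i)"
    using i teich_mult[OF assms(1)] by simp
qed simp

lemma s_eigen: assumes "A \<in> Fqs" "D \<in> Fqs" "A \<noteq> 0" "D \<noteq> 0" "1 \<le> n"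
  shows "act (M2 (teich v red A) 0 0 (teich v red D)) (s_vec v u red r n k) x
     = D ^ r * (D * inverse A) ^ k * s_vec v u red r n k x"
proof -
  define c where "c = A * inverse D"
  have c: "c \<in> Fqs" "c \<noteq> 0" using assms by (auto simp: c_def intro: Fq_mult Fq_inverse)
  have gd: "teich v red A = teich v red c * teich v red D"
  proof -
    have cD: "c * D = A" using assms(4) by (simp add: c_def mult.assoc)
    then show ?thesis using teich_mult[OF c(1) assms(2)] by simp
  qed
  have uA: "unitv (teich v red A)" and uD: "unitv (teich v red D)"
    using teich_unit teich assms by (auto simp: unitv_def)
  have e: "act (M2 (teich v red A) 0 0 (teich v red D)) (bracket v u red r (M2 (u ^ n) (tnum v u red mu n) 0 1)) x
      = D ^ r * bracket v u red r (M2 (u ^ n) (tnum v u red (sig c mu n) n) 0 1) x"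
    if mu: "mu \<in> digits v red n" for mu
  proof -
    have "act (M2 (teich v red A) 0 0 (teich v red D)) (bracket v u red r (M2 (u ^ n) (tnum v u red mu n) 0 1)) x
      = red (teich v red D) ^ r * bracket v u red r (M2 (u ^ n) (tnum v u red (sig c mu n) n) 0 1) x"
    proof (rule act_bracket[OF _ _ uA uD])
      show "mmul (M2 (teich v red A) 0 0 (teich v red D)) (M2 (u ^ n) (tnum v u red mu n) 0 1) =
        mmul (M2 (u ^ n) (tnum v u red (sig c mu n) n) 0 1) (M2 (teich v red A) 0 0 (teich v red D))"
        by (simp add: tnum_sig[OF c(1) mu] gd ac_simps)
      show "mdet (M2 (teich v red A) 0 0 (teich v red D)) \<noteq> 0" using uA uD by (simp add: unitv_def)
    qed
    then show ?thesis using teich assms by simp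
  qed
  have "act (M2 (teich v red A) 0 0 (teich v red D)) (s_vec v u red r n k) x
     = (\<Sum>mu\<in>digits v red n. mu (n - 1) ^ k *
          act (M2 (teich v red A) 0 0 (teich v red D)) (bracket v u red r (M2 (u ^ n) (tnum v u red mu n) 0 1)) x)"
    by (simp add: act_def s_vec_def)
  also have "\<dots> = (\<Sum>mu\<in>digits v red n. mu (n - 1) ^ k *
          (D ^ r * bracket v u red r (M2 (u ^ n) (tnum v u red (sig c mu n) n) 0 1) x))"
    by (rule sum.cong) (simp_all add: e)
  also have "\<dots> = D ^ r * (\<Sum>mu\<in>digits v red n. mu (n - 1) ^ k *
          (\<lambda>nu. bracket v u red r (M2 (u ^ n) (tnum v u red nu n) 0 1) x) (sig c mu n))"
    by (simp add: sum_distrib_left mult.left_commute)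
  also have "\<dots> = D ^ r * (inverse c ^ k * s_vec v u red r n k x)"
    using digits_reindex[OF c assms(5), of k "\<lambda>nu. bracket v u red r (M2 (u ^ n) (tnum v u red nu n) 0 1) x"]
    by (simp add: s_vec_def)
  also have "inverse c = D * inverse A" by (simp add: c_def inverse_mult_distrib mult.commute)
  finally show ?thesis by (simp add: mult.assoc)
qed

lemma t_mat: "mmul (M2 (g * d) 0 0 d) (mmul (mmul (M2 U T 0 1) (M2 1 tau 0 1)) wmat)
   = mmul (mmul (mmul (M2 U (g*T) 0 1) (M2 1 (g*tau) 0 1)) wmat) (M2 d 0 0 (g * d))"
  by (simp add: wmat_def algebra_simps)

lemma t_eigen: assumes "A \<in> Fqs" "D \<in> Fqs" "A \<noteq> 0" "D \<noteq> 0" "1 \<le> n"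
  shows "act (M2 (teich v red A) 0 0 (teich v red D)) (t_vec v u red r n k) x
     = A ^ r * (D * inverse A) ^ k * t_vec v u red r n k x"
proof -
  define c where "c = A * inverse D"
  have c: "c \<in> Fqs" "c \<noteq> 0" using assms by (auto simp: c_def intro: Fq_mult Fq_inverse)
  have gd: "teich v red A = teich v red c * teich v red D"
  proof -
    have cD: "c * D = A" using assms(4) by (simp add: c_def mult.assoc)
    then show ?thesis using teich_mult[OF c(1) assms(2)] by simp
  qed
  have uA: "unitv (teich v red A)" and uD: "unitv (teich v red D)"
    using teich_unit teich assms by (auto simp: unitv_def)
  define M where "M mu = mmul (mmul (M2 (u ^ (n - 1)) (tnum v u red mu (n - 1)) 0 1)
                    (M2 1 (teich v red (mu (n - 1))) 0 1)) wmat" for mu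
  have tv: "t_vec v u red r n k = (\<lambda>x. \<Sum>mu\<in>digits v red n. mu (n - 1) ^ k * bracket v u red r (M mu) x)"
    unfolding t_vec_def M_def by (rule refl)
  have e: "act (M2 (teich v red A) 0 0 (teich v red D)) (bracket v u red r (M mu)) x
      = A ^ r * bracket v u red r (M (sig c mu n)) x"
    if mu: "mu \<in> digits v red n" for mu
  proof -
    have n1: "n - 1 \<in> {..<n}" using assms(5) by simp
    have mf: "mu (n - 1) \<in> Fqs" using mu n1 unfolding digits_def by (rule PiE_mem)
    have "sig c mu n (n - 1) = c * mu (n - 1)" using n1 by (rule restrict_apply')
    then have t1: "teich v red (sig c mu n (n - 1)) = teich v red c * teich v red (mu (n - 1))"
      using teich_mult[OF c(1) mf] by simp
    have "act (M2 (teich v red A) 0 0 (teich v red D)) (bracket v u red r (M mu)) x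
      = red (teich v red A) ^ r * bracket v u red r (M (sig c mu n)) x"
    proof (rule act_bracket[OF _ _ uD uA])
      show "mmul (M2 (teich v red A) 0 0 (teich v red D)) (M mu) =
        mmul (M (sig c mu n)) (M2 (teich v red D) 0 0 (teich v red A))"
        unfolding M_def tnum_sig[OF c(1) mu diff_le_self] t1 gd by (rule t_mat)
      show "mdet (M2 (teich v red A) 0 0 (teich v red D)) \<noteq> 0" using uA uD by (simp add: unitv_def)
    qed
    then show ?thesis using teich(2)[OF assms(1)] by simp
  qed
  have "act (M2 (teich v red A) 0 0 (teich v red D)) (t_vec v u red r n k) x
     = (\<Sum>mu\<in>digits v red n. mu (n - 1) ^ k *
          act (M2 (teich v red A) 0 0 (teich v red D)) (bracket v u red r (M mu)) x)"
    unfolding tv act_def by (rule refl)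
  also have "\<dots> = (\<Sum>mu\<in>digits v red n. mu (n - 1) ^ k *
          (A ^ r * bracket v u red r (M (sig c mu n)) x))"
    by (rule sum.cong) (simp_all add: e)
  also have "\<dots> = A ^ r * (\<Sum>mu\<in>digits v red n. mu (n - 1) ^ k *
          (\<lambda>nu. bracket v u red r (M nu) x) (sig c mu n))"
    by (simp add: sum_distrib_left mult.left_commute)
  also have "\<dots> = A ^ r * (inverse c ^ k * t_vec v u red r n k x)"
    using digits_reindex[OF c assms(5), of k "\<lambda>nu. bracket v u red r (M nu) x"]
    unfolding tv by simp
  also have "inverse c = D * inverse A" by (simp add: c_def inverse_mult_distrib mult.commute)
  finally show ?thesis by (simp add: mult.assoc)
qed
lemma reduce: assumes "h \<in> I1 v red" "mmul h t = g" "\<And>x. act t S x = lam * S x"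
    "(\<lambda>x. act h S x - S x) \<in> kersum v u red r"
  shows "(\<lambda>x. act g S x - lam * S x) \<in> kersum v u red r"
proof -
  have "(\<lambda>x. act g S x - lam * S x) = (\<lambda>x. lam * (act h S x - S x))"
  proof
    fix x
    have "act g S x = act t S (mmul x h)" unfolding act_def using assms(2) by (simp add: mmul_assoc)
    then show "act g S x - lam * S x = lam * (act h S x - S x)"
      using assms(3) by (simp add: act_def algebra_simps)
  qed
  then show ?thesis using kersum_scale[OF assms(4)] by simp
qed

lemma decomp: assumes "g \<in> Iw v"
  shows "red (m11 g) \<in> Fqs" "red (m22 g) \<in> Fqs" "red (m11 g) \<noteq> 0" "red (m22 g) \<noteq> 0"
    "mmul g (M2 (inverse (teich v red (red (m11 g)))) 0 0 (inverse (teich v red (red (m22 g))))) \<in> I1 v red"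
    "mmul (mmul g (M2 (inverse (teich v red (red (m11 g)))) 0 0 (inverse (teich v red (red (m22 g))))))
        (M2 (teich v red (red (m11 g))) 0 0 (teich v red (red (m22 g)))) = g"
proof -
  obtain a b c d where g: "g = M2 a b c d" by (cases g)
  have O4: "a \<in> Ov" "b \<in> Ov" "d \<in> Ov" "vge v c 1" "a * d - b * c \<noteq> 0" "v (a * d - b * c) = 0"
    using assms g by (auto simp: Iw_def)
  have cO: "c \<in> Ov" using O4(4) vge_mono by (simp add: O_iff)
  have bc: "vge v (b * c) 1" using vge_mult[of b 0 c 1] O4 by (simp add: O_iff)
  have ndet: "\<not> vge v (a * d - b * c) 1" using O4 by (simp add: vge_def)
  show A: "red (m11 g) \<in> Fqs" "red (m22 g) \<in> Fqs" using g O4 Fq_red by auto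
  show na: "red (m11 g) \<noteq> 0"
  proof
    assume "red (m11 g) = 0"
    then have "vge v a 1" using red_zero_iff O4 g by simp
    then have "vge v (a * d) 1" using vge_mult[of a 1 d 0] O4 by (simp add: O_iff)
    then show False using ndet bc vge_diff by blast
  qed
  show nd: "red (m22 g) \<noteq> 0"
  proof
    assume "red (m22 g) = 0"
    then have "vge v d 1" using red_zero_iff O4 g by simp
    then have "vge v (a * d) 1" using vge_mult[of a 0 d 1] O4 by (simp add: O_iff)
    then show False using ndet bc vge_diff by blast
  qed
  define al where "al = teich v red (red (m11 g))"
  define de where "de = teich v red (red (m22 g))"
  have ua: "unitv al" and ud: "unitv de" using teich_unit teich A na nd by (auto simp: unitv_def al_def de_def)
  have ral: "red al = red a" "red de = red d" using teich(2) A g by (auto simp: al_def de_def)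
  have hI: "mmul g (M2 (inverse al) 0 0 (inverse de)) \<in> Iw v"
    using Iw_diag[OF assms unitv_inv[OF ua] unitv_inv[OF ud]] .
  have "red (a * inverse al) = 1" "red (d * inverse de) = 1"
    using ral ua ud O4 na nd g by (auto simp: red_mul unitv_def O_inverse red_inverse)
  then show "mmul g (M2 (inverse (teich v red (red (m11 g)))) 0 0 (inverse (teich v red (red (m22 g))))) \<in> I1 v red"
    using hI g unfolding al_def[symmetric] de_def[symmetric] by (simp add: I1_def)
  show "mmul (mmul g (M2 (inverse (teich v red (red (m11 g)))) 0 0 (inverse (teich v red (red (m22 g))))))
        (M2 (teich v red (red (m11 g))) 0 0 (teich v red (red (m22 g)))) = g"
    unfolding al_def[symmetric] de_def[symmetric] using ua ud g by (simp add: mmul_assoc unitv_def)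
qed

end

theorem lemma4p3:
  fixes v :: "'f::field_char_0 \<Rightarrow> int" and u :: 'f and p :: nat
    and red :: "'f \<Rightarrow> 'k::field" and r n k s :: nat and g :: "'f m2"
  assumes "padic_setting v u p red"
    and "0 < r" and "r < card (Fq v red) - 1"
    and "1 \<le> n"
    and "k \<le> card (Fq v red) - 1" and "s \<le> card (Fq v red) - 1"
    and "g \<in> Iw v"
  shows
    "((\<forall>h\<in>I1 v red. (\<lambda>x. act h (s_vec v u red r n k) x - s_vec v u red r n k x) \<in> kersum v u red r)
        \<longrightarrow> (\<lambda>x. act g (s_vec v u red r n k) x
                 - red (m22 g) ^ r * (red (m22 g) * inverse (red (m11 g))) ^ k * s_vec v u red r n k x)
              \<in> kersum v u red r)
     \<and>
     ((\<forall>h\<in>I1 v red. (\<lambda>x. act h (t_vec v u red r n s) x - t_vec v u red r n s x) \<in> kersum v u red r)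
        \<longrightarrow> (\<lambda>x. act g (t_vec v u red r n s) x
                 - red (m11 g) ^ r * (red (m22 g) * inverse (red (m11 g))) ^ s * t_vec v u red r n s x)
              \<in> kersum v u red r)"
proof -
  interpret ps v u p red by unfold_locales (rule assms(1))
  note D = decomp[OF assms(7)]
  show ?thesis
  proof (intro conjI impI)
    assume H: "\<forall>h\<in>I1 v red. (\<lambda>x. act h (s_vec v u red r n k) x - s_vec v u red r n k x) \<in> kersum v u red r"
    show "(\<lambda>x. act g (s_vec v u red r n k) x
                 - red (m22 g) ^ r * (red (m22 g) * inverse (red (m11 g))) ^ k * s_vec v u red r n k x)
              \<in> kersum v u red r"
      by (rule reduce[OF D(5) D(6) s_eigen[OF D(1-4) assms(4)]]) (use H D(5) in blast)
  next
    assume H: "\<forall>h\<in>I1 v red. (\<lambda>x. act h (t_vec v u red r n s) x - t_vec v u red r n s x) \<in> kersum v u red r"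
    show "(\<lambda>x. act g (t_vec v u red r n s) x
                 - red (m11 g) ^ r * (red (m22 g) * inverse (red (m11 g))) ^ s * t_vec v u red r n s x)
              \<in> kersum v u red r"
      by (rule reduce[OF D(5) D(6) t_eigen[OF D(1-4) assms(4)]]) (use H D(5) in blast)
  qed
qed

end
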